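(* Consider the scenario of three two-outcome measurements $1,2,3$, each pair of which is compatible, and Specker's behaviour in which, for each pair $(i,j)\in\{(1,2),(2,3),(3,1)\}$, $P(00\mid ij)=P(11\mid ij)=0$ and $P(01\mid ij)=P(10\mid ij)=\tfrac12$. Then the product of two statistically independent copies of this behaviour violates the exclusivity principle: there is a set of pairwise mutually exclusive events of the two-copy experiment whose probabilities sum to more than $1$. The same holds for Wright's behaviour on five two-outcome measurements $1,\dots,5$ with $i$ and $i+1 \pmod 5$ compatible, defined by $P(00\mid i,i+1)=P(11\mid i,i+1)=0$, $P(01\mid i,i+1)=P(10\mid i,i+1)=\tfrac12$.
   Context: $P(a b\mid i j)$ denotes the probability of outcomes $a$ for measurement $i$ and $b$ for measurement $j$. Two events are mutually exclusive if they assign different outcomes to a common measurement. In the joint experiment of two statistically independent copies, events are pairs $(e,e')$ with probability $P(e)P(e')$, and $(e,e')$, $(f,f')$ are mutually exclusive iff $e,f$ are exclusive or $e',f'$ are exclusive. The exclusivity principle: the probabilities of any set of pairwise mutually exclusive events sum to at most $1$. *)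

theory Defs
  imports Main "HOL-Analysis.Analysis"
begin

text \<open>An event of a single experiment: a context (an ordered pair of compatible
measurements (i,j)) together with outcomes (a,b), standing for "a for i and b for j".
A behaviour is a set of contexts together with P(a b | i j).\<close>

type_synonym event = "(nat \<times> nat) \<times> (nat \<times> nat)"

definition assigns :: "event \<Rightarrow> nat \<Rightarrow> nat \<Rightarrow> bool" where
  "assigns e m r \<longleftrightarrow>
     (fst (fst e) = m \<and> fst (snd e) = r) \<or> (snd (fst e) = m \<and> snd (snd e) = r)"

definition exclusive :: "event \<Rightarrow> event \<Rightarrow> bool" where
  "exclusive e f \<longleftrightarrow> (\<exists>m r r'. assigns e m r \<and> assigns f m r' \<and> r \<noteq> r')"

definition events :: "(nat \<times> nat) set \<Rightarrow> event set" where
  "events C = {e. fst e \<in> C \<and> fst (snd e) \<in> {0,1} \<and> snd (snd e) \<in> {0,1}}"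

definition exclusive2 :: "event \<times> event \<Rightarrow> event \<times> event \<Rightarrow> bool" where
  "exclusive2 x y \<longleftrightarrow> exclusive (fst x) (fst y) \<or> exclusive (snd x) (snd y)"

definition two_copies_violate_EP :: "(nat \<times> nat) set \<Rightarrow> (event \<Rightarrow> real) \<Rightarrow> bool" where
  "two_copies_violate_EP C P \<longleftrightarrow>
     (\<exists>S. finite S \<and> S \<subseteq> events C \<times> events C \<and>
          (\<forall>x\<in>S. \<forall>y\<in>S. x \<noteq> y \<longrightarrow> exclusive2 x y) \<and>
          (\<Sum>x\<in>S. P (fst x) * P (snd x)) > 1)"

definition anticorr :: "event \<Rightarrow> real" where
  "anticorr e = (if fst (snd e) \<noteq> snd (snd e) then 1/2 else 0)"

definition specker_contexts :: "(nat \<times> nat) set" where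
  "specker_contexts = {(1,2), (2,3), (3,1)}"

definition wright_contexts :: "(nat \<times> nat) set" where
  "wright_contexts = {(1,2), (2,3), (3,4), (4,5), (5,1)}"

end

theory Submission
  imports Defs
begin

lemma exclusive_iff:
  "exclusive ((i,j),(a,b)) ((k,l),(c,d)) \<longleftrightarrow>
    (i = k \<and> a \<noteq> c) \<or> (i = l \<and> a \<noteq> d) \<or> (j = k \<and> b \<noteq> c) \<or> (j = l \<and> b \<noteq> d)"
  unfolding exclusive_def assigns_def by auto

lemma events_iff: "((i,j),(a,b)) \<in> events C \<longleftrightarrow> (i,j) \<in> C \<and> a \<in> {0,1} \<and> b \<in> {0,1}"
  unfolding events_def by auto

theorem mainTheorem7:
  shows "two_copies_violate_EP specker_contexts anticorr \<and>
         two_copies_violate_EP wright_contexts anticorr"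
proof
  show "two_copies_violate_EP specker_contexts anticorr"
    unfolding two_copies_violate_EP_def
    apply (rule exI[where x="{(((1, 2), (0, 1)), ((1, 2), (0, 1))), (((1, 2), (0, 1)), ((1, 2), (1, 0))), (((1, 2), (1, 0)), ((1, 2), (0, 1))), (((1, 2), (1, 0)), ((2, 3), (0, 1))), (((1, 2), (1, 0)), ((3, 1), (0, 1)))}"])
    by (simp add: exclusive2_def exclusive_iff events_iff specker_contexts_def anticorr_def)
  show "two_copies_violate_EP wright_contexts anticorr"
    unfolding two_copies_violate_EP_def
    apply (rule exI[where x="{(((1, 2), (0, 1)), ((1, 2), (0, 1))), (((2, 3), (0, 1)), ((3, 4), (0, 1))), (((3, 4), (0, 1)), ((5, 1), (0, 1))), (((4, 5), (0, 1)), ((2, 3), (0, 1))), (((5, 1), (0, 1)), ((4, 5), (0, 1)))}"])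
    by (simp add: exclusive2_def exclusive_iff events_iff wright_contexts_def anticorr_def)
qed

end
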